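(* Let $K$ be a field with two commuting endomorphisms $\phi,\sigma$ satisfying Condition $\mathcal{H}$. Let $A\in\mathrm{GL}_n(K)$ and let $L_A$ be a $\sigma$-Picard–Vessiot extension for $\phi(Y)=AY$ over $K$. If $L_A$ is a field, then $K$ is relatively algebraically closed in $L_A$.
   Context: Condition $\mathcal{H}$: $\sigma\colon K\to K$ is an automorphism; $C=K^\phi=\{a\in K:\phi(a)=a\}$ is algebraically closed; and for every positive integer $r$, $K$ has no finite nontrivial $\phi^r$-field extension (no finite field extension $K'\neq K$ with an endomorphism extending $\phi^r$). A $\sigma$-Picard–Vessiot extension which is a field: a field $L_A\supset K$ with commuting endomorphisms $\phi,\sigma$ extending those of $K$, with $U\in\mathrm{GL}_n(L_A)$, $\phi(U)=AU$, $L_A$ generated as a field over $K$ by entries of $\sigma^i(U)$, $i\ge0$, and $L_A^\phi=K^\phi$. *)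

theory Defs
  imports "HOL-Analysis.Finite_Cartesian_Product" "HOL-Computational_Algebra.Polynomial"
          "HOL-Algebra.Ring" "HOL-Algebra.RingHom"
begin

definition ring_endo :: "('a::ring_1 \<Rightarrow> 'b::ring_1) \<Rightarrow> bool" where
  "ring_endo f \<longleftrightarrow> f 1 = 1 \<and> (\<forall>a b. f (a + b) = f a + f b) \<and> (\<forall>a b. f (a * b) = f a * f b)"

definition fixed :: "('a \<Rightarrow> 'a) \<Rightarrow> 'a set" where
  "fixed f = {a. f a = a}"

definition alg_closed_subfield :: "'k::field set \<Rightarrow> bool" where
  "alg_closed_subfield C \<longleftrightarrow>
     (\<forall>p::'k poly. (\<forall>i. coeff p i \<in> C) \<and> degree p > 0 \<longrightarrow> (\<exists>x\<in>C. poly p x = 0))"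

(* Every finite extension of K is a finite-dimensional
   K-vector space, hence in bijection with a set of polynomials over K; therefore
   extensions are represented (up to isomorphism) by field structures on subsets of 'k poly. *)
definition finite_ext_with_endo ::
  "('k::field \<Rightarrow> 'k) \<Rightarrow> ('k poly) ring \<Rightarrow> ('k \<Rightarrow> 'k poly) \<Rightarrow> ('k poly \<Rightarrow> 'k poly) \<Rightarrow> bool" where
  "finite_ext_with_endo phi0 R \<iota> \<psi> \<longleftrightarrow>
     field R \<and> range \<iota> \<subseteq> carrier R \<and> \<iota> 1 = \<one>\<^bsub>R\<^esub> \<and>
     (\<forall>a b. \<iota> (a + b) = \<iota> a \<oplus>\<^bsub>R\<^esub> \<iota> b) \<and> (\<forall>a b. \<iota> (a * b) = \<iota> a \<otimes>\<^bsub>R\<^esub> \<iota> b) \<and>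
     (\<exists>B. finite B \<and> B \<subseteq> carrier R \<and>
        (\<forall>x\<in>carrier R. \<exists>c. x = finsum R (\<lambda>b. \<iota> (c b) \<otimes>\<^bsub>R\<^esub> b) B)) \<and>
     \<psi> \<in> ring_hom R R \<and> (\<forall>a. \<psi> (\<iota> a) = \<iota> (phi0 a))"

definition condition_H :: "('k::field \<Rightarrow> 'k) \<Rightarrow> ('k \<Rightarrow> 'k) \<Rightarrow> bool" where
  "condition_H \<phi> \<sigma> \<longleftrightarrow>
     bij \<sigma> \<and> alg_closed_subfield (fixed \<phi>) \<and>
     (\<forall>r::nat. r > 0 \<longrightarrow>
        (\<forall>R \<iota> \<psi>. finite_ext_with_endo (\<phi> ^^ r) R \<iota> \<psi> \<longrightarrow> carrier R = range \<iota>))"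

definition is_subfield :: "'a::field set \<Rightarrow> bool" where
  "is_subfield S \<longleftrightarrow> 0 \<in> S \<and> 1 \<in> S \<and> (\<forall>x\<in>S. \<forall>y\<in>S. x + y \<in> S \<and> x * y \<in> S) \<and>
     (\<forall>x\<in>S. - x \<in> S \<and> inverse x \<in> S)"

definition generates_field :: "'a::field set \<Rightarrow> bool" where
  "generates_field G \<longleftrightarrow> (\<forall>S. is_subfield S \<and> G \<subseteq> S \<longrightarrow> S = UNIV)"

definition sigma_PV_field ::
  "('k::field \<Rightarrow> 'k) \<Rightarrow> ('k \<Rightarrow> 'k) \<Rightarrow> 'k^'n^'n \<Rightarrow>
   ('k \<Rightarrow> 'l::field) \<Rightarrow> ('l \<Rightarrow> 'l) \<Rightarrow> ('l \<Rightarrow> 'l) \<Rightarrow> 'l^'n^'n \<Rightarrow> bool" where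
  "sigma_PV_field \<phi> \<sigma> A e \<Phi> \<Sigma> U \<longleftrightarrow>
     ring_endo e \<and> ring_endo \<Phi> \<and> ring_endo \<Sigma> \<and> \<Phi> \<circ> \<Sigma> = \<Sigma> \<circ> \<Phi> \<and>
     (\<forall>a. \<Phi> (e a) = e (\<phi> a)) \<and> (\<forall>a. \<Sigma> (e a) = e (\<sigma> a)) \<and>
     invertible U \<and> map_matrix \<Phi> U = map_matrix e A ** U \<and>
     generates_field (range e \<union> {(\<Sigma> ^^ i) (U $ j $ k) | i j k. True}) \<and>
     fixed \<Phi> = e ` fixed \<phi>"

definition rel_alg_closed_in :: "('k::field \<Rightarrow> 'l::field) \<Rightarrow> bool" where
  "rel_alg_closed_in e \<longleftrightarrow>
     (\<forall>x. (\<exists>p::'k poly. p \<noteq> 0 \<and> poly (map_poly e p) x = 0) \<longrightarrow> x \<in> range e)"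

end

theory Submission
  imports Defs "HOL-Algebra.Finite_Extensions"
begin
definition L0 :: "'a::field ring" where
  "L0 = \<lparr>carrier = UNIV, monoid.mult = (*), one = 1, zero = 0, add = (+)\<rparr>"

lemma L0_simps [simp]:
  "carrier L0 = UNIV" "monoid.mult L0 = (*)" "one L0 = 1" "zero L0 = 0" "add L0 = (+)"
  by (simp_all add: L0_def)

lemma field_L0: "field (L0 :: 'a::field ring)"
proof -
  have "\<exists>y. x + y = 0" for x :: 'a
    using add.right_inverse by blast
  moreover have "x \<noteq> 0 \<Longrightarrow> \<exists>y. x * y = 1" for x :: 'a
    by (rule exI[of _ "inverse x"]) auto
  ultimately show ?thesis
    unfolding L0_def using add.right_inverse
    by unfold_locales (auto simp:algebra_simps Units_def)
qed

lemma ring_L0: "ring L0" using field_L0 field.is_ring by blast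
lemma domain_L0: "domain L0" using field_L0 field.axioms(1) by blast
lemma cring_L0: "cring L0" using domain_L0 domain.axioms(1) by blast

lemma L0_minus [simp]: "a_inv L0 x = - x"
  using abelian_group.minus_equality[of L0 "-x" x] ring_L0 ring.is_abelian_group by fastforce

lemma L0_inv [simp]: "(x::'a::field) \<noteq> 0 \<Longrightarrow> m_inv L0 x = inverse x"
proof -
  assume x: "x \<noteq> 0"
  interpret M: monoid L0 using ring_L0 ring.axioms(2) by blast
  show ?thesis using M.inv_char[of x "inverse x"] x by simp
qed

lemma L0_pow [simp]: "([^]\<^bsub>L0\<^esub>) (x::'a::field) (n::nat) = x ^ n"
  by (induct n) (simp_all add: L0_def nat_pow_def)

lemma L0_minus2 [simp]: "a_minus L0 x y = x - y"
  by (simp add: a_minus_def)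

lemma subfield_L0_iff: "subfield S (L0::'a::field ring) \<longleftrightarrow> is_subfield S"
proof
  assume S: "subfield S L0"
  have sr: "subring S L0" using S subfieldE(1) by blast
  note E = subringE[OF sr]
  have "inverse x \<in> S" if "x \<in> S" for x
  proof (cases "x = 0")
    case True then show ?thesis using E(2) by simp
  next
    case False
    have "m_inv L0 x \<in> S" using ring.subfield_m_inv(1)[OF ring_L0 S, of x] that False by simp
    then show ?thesis using False by simp
  qed
  then show "is_subfield S" unfolding is_subfield_def using E by (auto simp del: L0_minus) (metis L0_minus)
next
  assume S: "is_subfield S"
  have sr: "subring S L0"
    apply (rule ring.subringI[OF ring_L0])
    using S unfolding is_subfield_def by auto
  show "subfield S L0"
    apply (rule field.subfieldI'[OF field_L0 sr])
    using S unfolding is_subfield_def by auto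
qed

lemma eval_L0_Poly: "ring.eval L0 l (x::'a::field) = poly (Poly (rev l)) x"
proof (induct l)
  case Nil then show ?case by (simp add: ring.eval.simps[OF ring_L0])
next
  case (Cons a l)
  have "ring.eval L0 (a # l) x = a * x ^ length l + ring.eval L0 l x"
    by (simp add: ring.eval.simps[OF ring_L0])
  also have "\<dots> = poly (Poly (rev (a # l))) x"
    using Cons by (simp add: Poly_append poly_monom algebra_simps)
  finally show ?case .
qed

lemma eval_L0_coeffs: "ring.eval L0 (rev (coeffs q)) (x::'a::field) = poly q x"
  by (simp add: eval_L0_Poly)

definition alg :: "'a::field set \<Rightarrow> 'a \<Rightarrow> bool" where
  "alg S x \<longleftrightarrow> (\<exists>q. q \<noteq> 0 \<and> (\<forall>i. Polynomial.coeff q i \<in> S) \<and> poly q x = 0)"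

lemma set_coeffs_in: "(\<forall>i. Polynomial.coeff q i \<in> S) \<Longrightarrow> set (coeffs q) \<subseteq> S"
proof
  fix y assume h: "\<forall>i. Polynomial.coeff q i \<in> S" and y: "y \<in> set (coeffs q)"
  then obtain i where "i < length (coeffs q)" "y = coeffs q ! i" by (metis in_set_conv_nth)
  then have "y = Polynomial.coeff q i"
    by (metis nth_default_coeffs_eq nth_default_nth)
  then show "y \<in> S" using h by simp
qed

lemma alg_iff:
  assumes S: "is_subfield (S::'a::field set)"
  shows "(\<not> ring.transcendental L0 S x) \<longleftrightarrow> alg S x"
proof
  have sr: "subring S L0" using S subfield_L0_iff subfieldE(1) by blast
  assume "\<not> ring.transcendental L0 S x"
  then obtain p where p: "p \<in> carrier (S[X]\<^bsub>L0\<^esub>)" "p \<noteq> []" "ring.eval L0 p x = 0"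
    using domain.algebraicE[OF domain_L0 sr, of x] by (auto simp: over_def)
  have pol: "polynomial\<^bsub>L0\<^esub> S p" using p(1) univ_poly_carrier by blast
  then have hd: "hd p \<noteq> 0" "set p \<subseteq> S" using p(2) unfolding polynomial_def by auto
  let ?q = "Poly (rev p)"
  have "Polynomial.coeff ?q (length p - 1) = hd p"
    using p(2) by (cases p) (auto simp: nth_default_def nth_append)
  then have "?q \<noteq> 0" using hd(1) by (metis coeff_0)
  moreover have "Polynomial.coeff ?q i \<in> S" for i
  proof (cases "i < length p")
    case True
    then have "rev p ! i \<in> set p" by (metis length_rev nth_mem set_rev)
    then show ?thesis using hd(2) True by (auto simp add: nth_default_def)
  next
    case False
    then show ?thesis using S by (simp add: nth_default_def is_subfield_def)
  qed
  moreover have "poly ?q x = 0" using p(3) eval_L0_Poly by metis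
  ultimately show "alg S x" unfolding alg_def by blast
next
  assume "alg S x"
  then obtain q where q: "q \<noteq> 0" "\<forall>i. Polynomial.coeff q i \<in> S" "poly q x = 0" unfolding alg_def by blast
  let ?p = "rev (coeffs q)"
  have "polynomial\<^bsub>L0\<^esub> S ?p"
    unfolding polynomial_def using q set_coeffs_in[OF q(2)]
    by (auto simp: hd_rev last_coeffs_eq_coeff_degree)
  then have "?p \<in> carrier (S[X]\<^bsub>L0\<^esub>)" using univ_poly_carrier by blast
  moreover have "?p \<noteq> []" using q by simp
  moreover have "ring.eval L0 ?p x = 0" using eval_L0_coeffs q by metis
  ultimately show "\<not> ring.transcendental L0 S x"
    using ring.algebraicI[OF ring_L0, of ?p S x] unfolding over_def L0_simps by blast
qed

lemma combine_L0:
  "ring.combine L0 Ks Us = (\<Sum>j<min (length Ks) (length Us). Ks!j * (Us!j::'a::field))"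
proof (induct Ks arbitrary: Us)
  case Nil then show ?case by (simp add: ring.combine.simps[OF ring_L0])
next
  case (Cons k Ks)
  then show ?case
  proof (cases Us)
    case Nil then show ?thesis by (simp add: ring.combine.simps[OF ring_L0])
  next
    case (Cons u Us')
    then show ?thesis using Cons.hyps
      by (simp add: ring.combine.simps[OF ring_L0] sum.lessThan_Suc_shift del: sum.lessThan_Suc)
  qed
qed

definition lin_indep :: "'a::field set \<Rightarrow> 'a list \<Rightarrow> bool" where
  "lin_indep T us \<longleftrightarrow> (\<forall>c. (\<forall>j<length us. c j \<in> T) \<longrightarrow> (\<Sum>j<length us. c j * us!j) = 0
       \<longrightarrow> (\<forall>j<length us. c j = 0))"

lemma indep_iff:
  assumes T: "is_subfield (T::'a::field set)"
  shows "ring.independent L0 T us \<longleftrightarrow> lin_indep T us"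
proof
  have sf: "subfield T L0" using T subfield_L0_iff by blast
  assume ind: "ring.independent L0 T us"
  show "lin_indep T us" unfolding lin_indep_def
  proof (intro allI impI)
    fix c j assume c: "\<forall>j<length us. c j \<in> T" and s: "(\<Sum>j<length us. c j * us!j) = 0" and j: "j < length us"
    let ?Ks = "map c [0..<length us]"
    have "set ?Ks \<subseteq> T" using c by auto
    moreover have "ring.combine L0 ?Ks us = 0" using s by (simp add: combine_L0)
    ultimately have "set (take (length us) ?Ks) \<subseteq> {0}"
      using ring.independent_imp_trivial_combine[OF ring_L0 sf ind, of ?Ks] by simp
    then have "set ?Ks \<subseteq> {0}" by simp
    moreover have "c j \<in> set ?Ks" using j by simp
    ultimately show "c j = 0" by blast
  qed
next
  have sf: "subfield T L0" using T subfield_L0_iff by blast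
  assume li: "lin_indep T us"
  show "ring.independent L0 T us"
  proof (rule ring.trivial_combine_imp_independent[OF ring_L0 sf])
    show "set us \<subseteq> carrier L0" by simp
    fix Ks assume Ks: "set Ks \<subseteq> T" "ring.combine L0 Ks us = \<zero>\<^bsub>L0\<^esub>"
    let ?c = "\<lambda>j. if j < length Ks then Ks!j else 0"
    have cT: "\<forall>j<length us. ?c j \<in> T"
    proof (intro allI impI)
      fix j assume "j < length us"
      show "?c j \<in> T"
      proof (cases "j < length Ks")
        case True
        then have "Ks ! j \<in> set Ks" by (rule nth_mem)
        then show ?thesis using True Ks(1) by auto
      next
        case False then show ?thesis using T unfolding is_subfield_def by simp
      qed
    qed
    have "(\<Sum>j<length us. ?c j * us!j) = (\<Sum>j<min (length Ks) (length us). Ks!j * us!j)"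
      apply (rule sum.mono_neutral_cong_right)
      apply simp
      apply simp
      apply (simp add: min_def)
      apply simp
      done
    also have "\<dots> = 0" using Ks(2) by (simp add: combine_L0)
    finally have s0: "(\<Sum>j<length us. ?c j * us!j) = 0" .
    have imp: "(\<forall>j<length us. ?c j \<in> T) \<longrightarrow> (\<Sum>j<length us. ?c j * us!j) = 0 \<longrightarrow> (\<forall>j<length us. ?c j = 0)"
      using li unfolding lin_indep_def by (rule spec)
    have "\<forall>j<length us. ?c j = 0" using mp[OF mp[OF imp cT] s0] .
    then show "set (take (length us) Ks) \<subseteq> {\<zero>\<^bsub>L0\<^esub>}"
    proof -
      assume z: "\<forall>j<length us. ?c j = 0"
      show ?thesis
      proof
        fix y assume "y \<in> set (take (length us) Ks)"
        then obtain i where i: "i < length (take (length us) Ks)" "y = take (length us) Ks ! i"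
          by (metis in_set_conv_nth)
        have "i < length us" "i < length Ks" using i(1) by auto
        then have "?c i = 0" using z by blast
        then show "y \<in> {\<zero>\<^bsub>L0\<^esub>}" using i \<open>i < length us\<close> \<open>i < length Ks\<close> by simp
      qed
    qed
  qed
qed

definition polyin :: "'a::field set \<Rightarrow> 'a poly \<Rightarrow> bool" where
  "polyin T p \<longleftrightarrow> (\<forall>i. Polynomial.coeff p i \<in> T)"

lemma subf_0: "is_subfield T \<Longrightarrow> 0 \<in> T" by (simp add: is_subfield_def)
lemma subf_1: "is_subfield T \<Longrightarrow> 1 \<in> T" by (simp add: is_subfield_def)
lemma subf_add: "is_subfield T \<Longrightarrow> x \<in> T \<Longrightarrow> y \<in> T \<Longrightarrow> x + y \<in> T" by (simp add: is_subfield_def)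
lemma subf_mult: "is_subfield T \<Longrightarrow> x \<in> T \<Longrightarrow> y \<in> T \<Longrightarrow> x * y \<in> T" by (simp add: is_subfield_def)
lemma subf_uminus: "is_subfield T \<Longrightarrow> x \<in> T \<Longrightarrow> - x \<in> T" by (simp add: is_subfield_def)
lemma subf_inverse: "is_subfield T \<Longrightarrow> x \<in> T \<Longrightarrow> inverse x \<in> T" by (simp add: is_subfield_def)
lemma subf_diff: "is_subfield T \<Longrightarrow> x \<in> T \<Longrightarrow> y \<in> T \<Longrightarrow> x - y \<in> T"
  using subf_add[of T x "-y"] subf_uminus[of T y] by simp
lemma subf_divide: "is_subfield T \<Longrightarrow> x \<in> T \<Longrightarrow> y \<in> T \<Longrightarrow> x / y \<in> T"
  using subf_mult[of T x "inverse y"] subf_inverse[of T y] by (simp add: divide_inverse)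

lemma subf_sum: "is_subfield T \<Longrightarrow> (\<And>x. x \<in> A \<Longrightarrow> f x \<in> T) \<Longrightarrow> sum f A \<in> T"
proof (induct A rule: infinite_finite_induct)
  case (infinite A) then show ?case by (simp add: subf_0)
next
  case empty then show ?case by (simp add: subf_0)
next
  case (insert x F) then show ?case by (simp add: subf_add)
qed

lemma subf_prod: "is_subfield T \<Longrightarrow> (\<And>x. x \<in> A \<Longrightarrow> f x \<in> T) \<Longrightarrow> prod f A \<in> T"
proof (induct A rule: infinite_finite_induct)
  case (infinite A) then show ?case by (simp add: subf_1)
next
  case empty then show ?case by (simp add: subf_1)
next
  case (insert x F) then show ?case by (simp add: subf_mult)
qed

lemma polyin_0: "is_subfield T \<Longrightarrow> polyin T 0" by (simp add: polyin_def subf_0)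
lemma polyin_const: "is_subfield T \<Longrightarrow> a \<in> T \<Longrightarrow> polyin T [:a:]"
  by (simp add: polyin_def subf_0 coeff_pCons split: nat.splits)
lemma polyin_1: "is_subfield T \<Longrightarrow> polyin T 1"
  using polyin_const[of T 1] subf_1[of T] by (simp add: one_pCons)
lemma polyin_X: "is_subfield T \<Longrightarrow> polyin T [:0,1:]"
  by (simp add: polyin_def subf_0 subf_1 coeff_pCons split: nat.splits)
lemma polyin_add: "is_subfield T \<Longrightarrow> polyin T p \<Longrightarrow> polyin T q \<Longrightarrow> polyin T (p + q)"
  by (simp add: polyin_def subf_add)
lemma polyin_uminus: "is_subfield T \<Longrightarrow> polyin T p \<Longrightarrow> polyin T (- p)"
  by (simp add: polyin_def subf_uminus)
lemma polyin_mult: "is_subfield T \<Longrightarrow> polyin T p \<Longrightarrow> polyin T q \<Longrightarrow> polyin T (p * q)"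
  unfolding polyin_def coeff_mult by (intro allI subf_sum) (simp_all add: subf_mult)
lemma polyin_prod: "is_subfield T \<Longrightarrow> (\<And>x. x \<in> A \<Longrightarrow> polyin T (f x)) \<Longrightarrow> polyin T (prod f A)"
proof (induct A rule: infinite_finite_induct)
  case (infinite A) then show ?case by (simp add: polyin_1)
next
  case empty then show ?case by (simp add: polyin_1)
next
  case (insert x F) then show ?case by (simp add: polyin_mult)
qed
lemma polyin_mono: "polyin T p \<Longrightarrow> T \<subseteq> T' \<Longrightarrow> polyin T' p"
  by (auto simp: polyin_def)

lemma alg_mono: "alg T x \<Longrightarrow> T \<subseteq> T' \<Longrightarrow> alg T' x"
  unfolding alg_def by blast

definition fracs :: "'a::field set \<Rightarrow> 'a \<Rightarrow> 'a set" where
  "fracs T g = {poly p g / poly q g | p q. polyin T p \<and> polyin T q \<and> poly q g \<noteq> 0}"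

lemma fracsI: "polyin T p \<Longrightarrow> polyin T q \<Longrightarrow> poly q g \<noteq> 0 \<Longrightarrow> poly p g / poly q g \<in> fracs T g"
  unfolding fracs_def by blast

lemma fracs_subfield:
  assumes T: "is_subfield T"
  shows "is_subfield (fracs T g)"
  unfolding is_subfield_def
proof (intro conjI ballI)
  show "0 \<in> fracs T g" using fracsI[OF polyin_0[OF T] polyin_1[OF T], of g] by simp
  show "1 \<in> fracs T g" using fracsI[OF polyin_1[OF T] polyin_1[OF T], of g] by simp
next
  fix x y assume x: "x \<in> fracs T g" and y: "y \<in> fracs T g"
  obtain p q where pq: "polyin T p" "polyin T q" "poly q g \<noteq> 0" "x = poly p g / poly q g"
    using x unfolding fracs_def by blast
  obtain p' q' where pq': "polyin T p'" "polyin T q'" "poly q' g \<noteq> 0" "y = poly p' g / poly q' g"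
    using y unfolding fracs_def by blast
  have "poly (p * q' + p' * q) g / poly (q * q') g \<in> fracs T g"
    by (rule fracsI) (simp_all add: pq pq' polyin_add polyin_mult T)
  moreover have "poly (p * q' + p' * q) g / poly (q * q') g = x + y"
    unfolding pq(4) pq'(4) using pq(3) pq'(3) by (simp add: field_simps)
  ultimately show "x + y \<in> fracs T g" by simp
  have "poly (p * p') g / poly (q * q') g \<in> fracs T g"
    by (rule fracsI) (simp_all add: pq pq' polyin_add polyin_mult T)
  moreover have "poly (p * p') g / poly (q * q') g = x * y"
    unfolding pq(4) pq'(4) using pq(3) pq'(3) by (simp add: field_simps)
  ultimately show "x * y \<in> fracs T g" by simp
next
  fix x assume x: "x \<in> fracs T g"
  obtain p q where pq: "polyin T p" "polyin T q" "poly q g \<noteq> 0" "x = poly p g / poly q g"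
    using x unfolding fracs_def by blast
  have "poly (- p) g / poly q g \<in> fracs T g"
    by (rule fracsI) (simp_all add: pq polyin_uminus T)
  then show "- x \<in> fracs T g" using pq(4) by simp
  show "inverse x \<in> fracs T g"
  proof (cases "poly p g = 0")
    case True
    then show ?thesis using fracsI[OF polyin_0[OF T] polyin_1[OF T], of g] pq(4) by simp
  next
    case False
    have "poly q g / poly p g \<in> fracs T g" by (rule fracsI) (simp_all add: pq False)
    then show ?thesis using pq(4) by simp
  qed
qed

lemma fracs_incl: "is_subfield T \<Longrightarrow> T \<subseteq> fracs T g"
proof
  fix a assume T: "is_subfield T" and a: "a \<in> T"
  have "poly [:a:] g / poly 1 g \<in> fracs T g" by (rule fracsI) (simp_all add: polyin_const polyin_1 T a)
  then show "a \<in> fracs T g" by simp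
qed

lemma fracs_gen: "is_subfield T \<Longrightarrow> g \<in> fracs T g"
  using fracsI[OF polyin_X[of T] polyin_1[of T], of g] by simp

abbreviation fd :: "'a::field set \<Rightarrow> 'a set \<Rightarrow> bool" where
  "fd T S \<equiv> ring.finite_dimension L0 T S"

lemma sf: "is_subfield T \<Longrightarrow> subfield T (L0::'a::field ring)" using subfield_L0_iff by blast
lemma sr: "is_subfield T \<Longrightarrow> subring T (L0::'a::field ring)" using sf subfieldE(1) by blast

lemma W1:
  assumes S: "is_subfield (S::'a::field set)" and g: "alg S g"
  shows "\<exists>S'. is_subfield S' \<and> S \<subseteq> S' \<and> g \<in> S' \<and> fd S S'"
proof (intro exI conjI)
  have a: "\<not> ring.transcendental L0 S g" using alg_iff[OF S] g by blast
  show "is_subfield (ring.simple_extension L0 S g)"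
    using domain.simple_extension_is_subfield[OF domain_L0 sf[OF S], of g] a
    unfolding over_def subfield_L0_iff by simp
  show "S \<subseteq> ring.simple_extension L0 S g"
    using ring.simple_extension_incl[OF ring_L0, of S g] by simp
  show "g \<in> ring.simple_extension L0 S g"
    using ring.simple_extension_mem[OF ring_L0 sr[OF S], of g] by simp
  show "fd S (ring.simple_extension L0 S g)"
    using domain.finite_dimension_simple_extension[OF domain_L0 sf[OF S], of g] a
    unfolding over_def by simp
qed

lemma W2:
  assumes "is_subfield (T::'a::field set)" "is_subfield S" "fd T S" "fd S E"
  shows "fd T E"
  using ring.telescopic_base_dim(1)[OF ring_L0 sf[OF assms(1)] sf[OF assms(2)] assms(3,4)] .

lemma W3:
  assumes "is_subfield (T::'a::field set)" "is_subfield S" "fd T S" "x \<in> S"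
  shows "alg T x"
  using ring.finite_dimension_imp_algebraic[OF ring_L0 sf[OF assms(1)] sr[OF assms(2)] assms(3,4)]
    alg_iff[OF assms(1)] unfolding over_def by simp

lemma W4:
  assumes T: "is_subfield (T::'a::field set)" and ws: "\<forall>w\<in>set ws. alg T w"
  shows "\<exists>S'. is_subfield S' \<and> T \<subseteq> S' \<and> set ws \<subseteq> S' \<and> fd T S'"
proof (intro exI conjI)
  have a: "\<And>w. w \<in> set ws \<Longrightarrow> ((\<lambda>K x. \<not> ring.transcendental L0 K x) over T) w"
    using ws alg_iff[OF T] unfolding over_def by simp
  show "is_subfield (ring.finite_extension L0 T ws)"
    using domain.finite_extension_is_subfield[OF domain_L0 sf[OF T], of ws] a
    unfolding subfield_L0_iff by simp
  show "T \<subseteq> ring.finite_extension L0 T ws"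
    using ring.finite_extension_incl[OF ring_L0, of T ws] by simp
  show "set ws \<subseteq> ring.finite_extension L0 T ws"
    using domain.finite_extension_mem[OF domain_L0 sr[OF T], of ws] by simp
  show "fd T (ring.finite_extension L0 T ws)"
    using domain.finite_extension_finite_dimension(1)[OF domain_L0 sf[OF T], of ws] a by simp
qed

lemma W5:
  assumes T: "is_subfield (T::'a::field set)" and "fd T S"
  shows "\<exists>ws. ring.Span L0 T ws = S"
proof -
  obtain n where "ring.dimension L0 n T S" using assms(2) unfolding ring.finite_dimension_def[OF ring_L0] by blast
  then show ?thesis using ring.exists_base[OF ring_L0 sf[OF T]] by blast
qed

lemma W8:
  assumes T: "is_subfield (T::'a::field set)" and y: "y \<in> ring.Span L0 T vs"
  shows "\<exists>c. (\<forall>j<length vs. c j \<in> T) \<and> y = (\<Sum>j<length vs. c j * vs!j)"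
proof -
  obtain Ks where Ks: "set Ks \<subseteq> T" "length Ks = length vs" "y = ring.combine L0 Ks vs"
    using ring.Span_mem_iff_length_version[OF ring_L0 sf[OF T], of vs y] y by auto
  show ?thesis
  proof (intro exI conjI allI impI)
    fix j assume "j < length vs"
    then show "Ks ! j \<in> T" using Ks(1,2) nth_mem by (metis subsetD)
  next
    show "y = (\<Sum>j<length vs. Ks!j * vs!j)" using Ks(2,3) by (simp add: combine_L0)
  qed
qed

lemma W6:
  assumes T: "is_subfield (T::'a::field set)" and S: "is_subfield S" "T \<subseteq> S" "set ws \<subseteq> S"
  shows "ring.Span L0 T ws \<subseteq> S"
proof
  fix y assume "y \<in> ring.Span L0 T ws"
  then obtain c where c: "\<forall>j<length ws. c j \<in> T" "y = (\<Sum>j<length ws. c j * ws!j)"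
    using W8[OF T] by blast
  have "(\<Sum>j<length ws. c j * ws!j) \<in> S"
  proof (rule subf_sum[OF S(1)])
    fix j assume "j \<in> {..<length ws}"
    then have "c j \<in> S" "ws ! j \<in> S" using c(1) assms(3,4) nth_mem by auto
    then show "c j * ws ! j \<in> S" using subf_mult[OF S(1)] by blast
  qed
  then show "y \<in> S" using c(2) by simp
qed

lemma W7:
  assumes T: "is_subfield (T::'a::field set)" and "fd T S"
  shows "\<exists>D. \<forall>us. lin_indep T us \<and> set us \<subseteq> S \<longrightarrow> length us \<le> D"
proof -
  obtain n where n: "ring.dimension L0 n T S" using assms(2) unfolding ring.finite_dimension_def[OF ring_L0] by blast
  show ?thesis
  proof (intro exI allI impI)
    fix us assume "lin_indep T us \<and> set us \<subseteq> S"
    then show "length us \<le> n"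
      using ring.independent_length_le_dimension[OF ring_L0 sf[OF T] n] indep_iff[OF T] by blast
  qed
qed

lemma W9:
  assumes T: "is_subfield (T::'a::field set)" and li: "lin_indep T vs" and y: "y \<notin> ring.Span L0 T vs"
  shows "lin_indep T (y # vs)"
proof -
  have "ring.independent L0 T vs" using indep_iff[OF T] li by blast
  then have "ring.independent L0 T (y # vs)"
    using ring.li_Cons[OF ring_L0, of y T vs] y by simp
  then show ?thesis using indep_iff[OF T] by blast
qed

definition REG :: "'a::field set \<Rightarrow> 'a set \<Rightarrow> bool" where
  "REG K0 T \<longleftrightarrow> (\<forall>us. (\<forall>u\<in>set us. alg K0 u) \<longrightarrow> lin_indep K0 us \<longrightarrow> lin_indep T us)"

lemma reg_step:
  assumes K0: "is_subfield (K0::'a::field set)" and T: "is_subfield T" and S: "is_subfield S"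
    and KT: "K0 \<subseteq> T" and TS: "T \<subseteq> S" and reg: "REG K0 T" and ng: "\<not> alg S g"
  shows "REG K0 (fracs T g)"
  unfolding REG_def
proof (intro allI impI)
  fix us assume al: "\<forall>u\<in>set us. alg K0 u" and li0: "lin_indep K0 us"
  have liT: "lin_indep T us" using reg li0 al unfolding REG_def by blast
  define m where "m = length us"
  have alT: "\<forall>u\<in>set us. alg T u" using al alg_mono KT by blast
  obtain A where A: "is_subfield A" "T \<subseteq> A" "set us \<subseteq> A" "fd T A" using W4[OF T alT] by blast
  have nA: "\<not> alg A g"
  proof
    assume "alg A g"
    then obtain S2 where S2: "is_subfield S2" "A \<subseteq> S2" "g \<in> S2" "fd A S2" using W1[OF A(1)] by blast
    have "fd T S2" using W2[OF T A(1) A(4) S2(4)] .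
    then have "alg T g" using W3[OF T S2(1) _ S2(3)] by blast
    then show False using ng alg_mono TS by blast
  qed
  show "lin_indep (fracs T g) us" unfolding lin_indep_def
  proof (intro allI impI)
    fix c j assume cin: "\<forall>j<length us. c j \<in> fracs T g"
      and s0: "(\<Sum>j<length us. c j * us!j) = 0" and j: "j < length us"
    define pp where "pp j = (SOME p. \<exists>q. polyin T p \<and> polyin T q \<and> poly q g \<noteq> 0 \<and> c j = poly p g / poly q g)" for j
    define qq where "qq j = (SOME q. polyin T (pp j) \<and> polyin T q \<and> poly q g \<noteq> 0 \<and> c j = poly (pp j) g / poly q g)" for j
    have pq: "polyin T (pp j) \<and> polyin T (qq j) \<and> poly (qq j) g \<noteq> 0 \<and> c j = poly (pp j) g / poly (qq j) g"
      if jm: "j < m" for j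
    proof -
      have "c j \<in> fracs T g" using cin jm m_def by blast
      then have "\<exists>p q. polyin T p \<and> polyin T q \<and> poly q g \<noteq> 0 \<and> c j = poly p g / poly q g"
        unfolding fracs_def by blast
      then have h1: "\<exists>q. polyin T (pp j) \<and> polyin T q \<and> poly q g \<noteq> 0 \<and> c j = poly (pp j) g / poly q g"
        unfolding pp_def by (rule someI_ex)
      show ?thesis unfolding qq_def by (rule someI_ex[OF h1])
    qed
    define Q where "Q = (\<Prod>l<m. poly (qq l) g)"
    have Q0: "Q \<noteq> 0" unfolding Q_def using pq by auto
    define PP where "PP j = pp j * (\<Prod>l\<in>{..<m}-{j}. qq l)" for j
    have PPin: "polyin T (PP j)" if "j < m" for j
      unfolding PP_def using pq[OF that] pq T by (auto intro!: polyin_mult polyin_prod)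
    have PPg: "poly (PP j) g = c j * Q" if jm: "j < m" for j
    proof -
      have "poly (PP j) g = poly (pp j) g * (\<Prod>l\<in>{..<m}-{j}. poly (qq l) g)"
        unfolding PP_def by (simp add: poly_prod)
      moreover have "Q = poly (qq j) g * (\<Prod>l\<in>{..<m}-{j}. poly (qq l) g)"
        unfolding Q_def using jm by (simp add: prod.remove)
      moreover have "c j * poly (qq j) g = poly (pp j) g" using pq[OF jm] by simp
      ultimately show ?thesis by (metis mult.assoc)
    qed
    define H where "H = (\<Sum>j<m. Polynomial.smult (us!j) (PP j))"
    have "poly H g = (\<Sum>j<m. us!j * poly (PP j) g)" unfolding H_def by (simp add: poly_sum)
    also have "\<dots> = (\<Sum>j<m. Q * (c j * us!j))" by (rule sum.cong) (simp_all add: PPg)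
    also have "\<dots> = Q * (\<Sum>j<m. c j * us!j)" by (simp add: sum_distrib_left)
    also have "\<dots> = 0" using s0 m_def by simp
    finally have Hg: "poly H g = 0" .
    have cH: "Polynomial.coeff H k = (\<Sum>j<m. Polynomial.coeff (PP j) k * us!j)" for k
      unfolding H_def by (simp add: coeff_sum mult.commute)
    have Hin: "polyin A H" unfolding polyin_def
    proof
      fix k
      show "Polynomial.coeff H k \<in> A" unfolding cH
      proof (rule subf_sum[OF A(1)])
        fix l assume l: "l \<in> {..<m}"
        have "Polynomial.coeff (PP l) k \<in> A" using PPin[of l] l A(2) unfolding polyin_def by auto
        moreover have "us ! l \<in> A" using l A(3) m_def nth_mem by auto
        ultimately show "Polynomial.coeff (PP l) k * us ! l \<in> A" using subf_mult[OF A(1)] by blast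
      qed
    qed
    have H0: "H = 0" using nA Hin Hg unfolding alg_def polyin_def by blast
    have PP0: "PP l = 0" if l: "l < m" for l
    proof (rule poly_eqI)
      fix k
      have imp: "(\<forall>j<length us. Polynomial.coeff (PP j) k \<in> T) \<longrightarrow>
          (\<Sum>j<length us. Polynomial.coeff (PP j) k * us!j) = 0 \<longrightarrow>
          (\<forall>j<length us. Polynomial.coeff (PP j) k = 0)"
        using liT unfolding lin_indep_def by (rule spec)
      have a1: "\<forall>j<length us. Polynomial.coeff (PP j) k \<in> T"
        using PPin m_def unfolding polyin_def by blast
      have a2: "(\<Sum>j<length us. Polynomial.coeff (PP j) k * us!j) = 0"
        using cH[of k] H0 m_def by simp
      show "Polynomial.coeff (PP l) k = Polynomial.coeff 0 k"
        using mp[OF mp[OF imp a1] a2] l m_def by simp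
    qed
    have "c j * Q = 0" using PPg[of j] PP0[of j] j m_def by simp
    then show "c j = 0" using Q0 by simp
  qed
qed

lemma core:
  assumes K0: "is_subfield (K0::'a::field set)"
  shows "\<exists>T S. is_subfield T \<and> is_subfield S \<and> K0 \<subseteq> T \<and> T \<subseteq> S \<and> fd T S \<and> set G \<subseteq> S \<and> REG K0 T"
proof (induct G)
  case Nil
  have "fd K0 K0"
    using ring.finite_dimensionI[OF ring_L0 ring.dimension_one[OF ring_L0 sf[OF K0]]] .
  moreover have "REG K0 K0" unfolding REG_def by blast
  ultimately show ?case using K0 by (intro exI[of _ K0]) auto
next
  case (Cons g G)
  then obtain T S where TS: "is_subfield T" "is_subfield S" "K0 \<subseteq> T" "T \<subseteq> S" "fd T S"
      "set G \<subseteq> S" "REG K0 T" by blast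
  show ?case
  proof (cases "alg S g")
    case True
    then obtain S' where S': "is_subfield S'" "S \<subseteq> S'" "g \<in> S'" "fd S S'" using W1[OF TS(2)] by blast
    have "fd T S'" using W2[OF TS(1,2,5) S'(4)] .
    then show ?thesis using TS S' by (intro exI[of _ T] exI[of _ S']) auto
  next
    case False
    define T' where "T' = fracs T g"
    have T': "is_subfield T'" using fracs_subfield[OF TS(1)] T'_def by simp
    have TT': "T \<subseteq> T'" using fracs_incl[OF TS(1)] T'_def by simp
    have gT': "g \<in> T'" using fracs_gen[OF TS(1)] T'_def by simp
    obtain ws where ws: "ring.Span L0 T ws = S" using W5[OF TS(1,5)] by blast
    have wsS: "set ws \<subseteq> S" using ring.Span_base_incl[OF ring_L0 sf[OF TS(1)], of ws] ws by simp
    have alw: "\<forall>w\<in>set ws. alg T' w"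
      using W3[OF TS(1,2,5)] wsS alg_mono[OF _ TT'] by blast
    obtain S' where S': "is_subfield S'" "T' \<subseteq> S'" "set ws \<subseteq> S'" "fd T' S'" using W4[OF T' alw] by blast
    have SS': "S \<subseteq> S'" using W6[OF TS(1) S'(1) _ S'(3)] TT' S'(2) ws by blast
    have "REG K0 T'" using reg_step[OF K0 TS(1,2,3,4,7) False] T'_def by simp
    then show ?thesis using T' S' SS' TT' gT' TS
      by (intro exI[of _ T'] exI[of _ S']) auto
  qed
qed

lemma re_0: "ring_endo f \<Longrightarrow> f 0 = 0"
  unfolding ring_endo_def by (metis add_cancel_right_right add_0)
lemma re_1: "ring_endo f \<Longrightarrow> f 1 = 1" unfolding ring_endo_def by blast
lemma re_add: "ring_endo f \<Longrightarrow> f (a + b) = f a + f b" unfolding ring_endo_def by blast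
lemma re_mult: "ring_endo f \<Longrightarrow> f (a * b) = f a * f b" unfolding ring_endo_def by blast
lemma re_uminus: "ring_endo f \<Longrightarrow> f (- a) = - f a"
proof -
  assume f: "ring_endo f"
  have "f a + f (- a) = 0" using re_add[OF f, of a "-a"] re_0[OF f] by simp
  then show ?thesis by (metis neg_eq_iff_add_eq_0)
qed
lemma re_inverse:
  fixes f :: "'a::field \<Rightarrow> 'b::field"
  shows "ring_endo f \<Longrightarrow> f (inverse a) = inverse (f a)"
proof (cases "a = 0")
  case True
  assume f: "ring_endo f" then show ?thesis using True re_0[OF f] by simp
next
  case False
  assume f: "ring_endo f"
  have "f a * f (inverse a) = 1" using re_mult[OF f, of a "inverse a"] re_1[OF f] False by simp
  then show ?thesis by (metis inverse_unique)
qed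
lemma re_zero_iff:
  fixes f :: "'a::field \<Rightarrow> 'b::field"
  shows "ring_endo f \<Longrightarrow> f a = 0 \<longleftrightarrow> a = 0"
proof
  assume f: "ring_endo f" and fa: "f a = 0"
  show "a = 0"
  proof (rule ccontr)
    assume "a \<noteq> 0"
    then have "f (a * inverse a) = 1" using re_1[OF f] by simp
    then show False using re_mult[OF f, of a "inverse a"] fa by simp
  qed
next
  assume f: "ring_endo f" and "a = 0"
  then show "f a = 0" using re_0[OF f] by simp
qed
lemma re_inj:
  fixes f :: "'a::field \<Rightarrow> 'b::field"
  shows "ring_endo f \<Longrightarrow> inj f"
proof (rule injI)
  fix x y assume f: "ring_endo f" and "f x = f y"
  then have "f (x - y) = 0" using re_add[OF f, of x "-y"] re_uminus[OF f, of y] by simp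
  then show "x = y" using re_zero_iff[OF f] by simp
qed
lemma re_sum:
  assumes f: "ring_endo f" shows "f (sum g A) = (\<Sum>x\<in>A. f (g x))"
proof (induct A rule: infinite_finite_induct)
  case (infinite A) then show ?case by (simp add: re_0[OF f])
next
  case empty then show ?case by (simp add: re_0[OF f])
next
  case (insert x F) then show ?case by (simp add: re_add[OF f])
qed
lemma re_comp: "ring_endo f \<Longrightarrow> ring_endo g \<Longrightarrow> ring_endo (f \<circ> g)"
  unfolding ring_endo_def by simp
lemma re_id: "ring_endo id" unfolding ring_endo_def by simp
lemma re_funpow:
  fixes f :: "'a::ring_1 \<Rightarrow> 'a"
  assumes f: "ring_endo f" shows "ring_endo (f ^^ i)"
proof (induct i)
  case 0 show ?case unfolding ring_endo_def by simp
next
  case (Suc i)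
  have "f ^^ Suc i = f \<circ> (f ^^ i)" by simp
  then show ?case using re_comp[OF f Suc] by metis
qed

lemma re_poly:
  fixes f :: "'a::field \<Rightarrow> 'b::field"
  assumes f: "ring_endo f"
  shows "poly (map_poly f q) (f y) = f (poly q y)"
proof (induct q)
  case 0 then show ?case by (simp add: re_0[OF f])
next
  case (pCons a p)
  then show ?case by (simp add: map_poly_pCons re_0[OF f] re_add[OF f] re_mult[OF f])
qed

lemma re_range_subfield:
  fixes e :: "'a::field \<Rightarrow> 'b::field"
  assumes e: "ring_endo e"
  shows "is_subfield (range e)"
  unfolding is_subfield_def
proof (intro conjI ballI)
  show "0 \<in> range e" using re_0[OF e] by (metis rangeI)
  show "1 \<in> range e" using re_1[OF e] by (metis rangeI)
next
  fix x y assume "x \<in> range e" "y \<in> range e"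
  then obtain a b where "x = e a" "y = e b" by blast
  then show "x + y \<in> range e" "x * y \<in> range e"
    using re_add[OF e] re_mult[OF e] by (metis rangeI)+
next
  fix x assume "x \<in> range e"
  then obtain a where "x = e a" by blast
  then show "- x \<in> range e" "inverse x \<in> range e"
    using re_uminus[OF e] re_inverse[OF e] by (metis rangeI)+
qed

definition gen_field :: "'a::field set \<Rightarrow> 'a set" where
  "gen_field Y = \<Inter>{S. is_subfield S \<and> Y \<subseteq> S}"

lemma gen_field_subfield: "is_subfield (gen_field Y)"
  unfolding gen_field_def is_subfield_def by blast
lemma gen_field_incl: "Y \<subseteq> gen_field Y"
  unfolding gen_field_def by blast
lemma gen_field_min: "is_subfield S \<Longrightarrow> Y \<subseteq> S \<Longrightarrow> gen_field Y \<subseteq> S"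
  unfolding gen_field_def by blast
lemma gen_field_mono: "Y \<subseteq> Z \<Longrightarrow> gen_field Y \<subseteq> gen_field Z"
  unfolding gen_field_def by blast

lemma subf_Int: "is_subfield A \<Longrightarrow> is_subfield B \<Longrightarrow> is_subfield (A \<inter> B)"
  unfolding is_subfield_def by blast

lemma alg_subfield:
  assumes K: "is_subfield (K::'a::field set)"
  shows "is_subfield {x. alg K x}"
proof -
  have "subfield {x \<in> carrier L0. ((\<lambda>K x. \<not> ring.transcendental L0 K x) over K) x} L0"
    using field.subfield_of_algebraics[OF field_L0 sf[OF K]] .
  moreover have "{x \<in> carrier L0. ((\<lambda>K x. \<not> ring.transcendental L0 K x) over K) x} = {x. alg K x}"
    using alg_iff[OF K] unfolding over_def by simp
  ultimately show ?thesis using subfield_L0_iff by metis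
qed

lemma lemB:
  assumes K0: "is_subfield (K0::'a::field set)" and T: "is_subfield T" and S: "is_subfield S"
    and FS: "F \<subseteq> S" and fdTS: "fd T S" and reg: "REG K0 T"
  shows "\<exists>Vs. set Vs \<subseteq> F \<inter> {x. alg K0 x} \<and> lin_indep K0 Vs \<and> F \<inter> {x. alg K0 x} \<subseteq> ring.Span L0 K0 Vs"
proof -
  define AF where "AF = F \<inter> {x. alg K0 x}"
  obtain D where D: "\<forall>us. lin_indep T us \<and> set us \<subseteq> S \<longrightarrow> length us \<le> D" using W7[OF T fdTS] by blast
  have bound: "length us \<le> D" if "lin_indep K0 us" "set us \<subseteq> AF" for us
  proof -
    have "\<forall>u\<in>set us. alg K0 u" using that(2) unfolding AF_def by blast
    then have "lin_indep T us" using reg that(1) unfolding REG_def by blast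
    moreover have "set us \<subseteq> S" using that(2) FS unfolding AF_def by blast
    ultimately show ?thesis using D by blast
  qed
  define P where "P n \<longleftrightarrow> (\<exists>us. lin_indep K0 us \<and> set us \<subseteq> AF \<and> length us = n)" for n
  have P0: "P 0" unfolding P_def lin_indep_def by (intro exI[of _ "[]"]) simp
  have Pb: "\<forall>n. P n \<longrightarrow> n \<le> D" unfolding P_def using bound by blast
  define n0 where "n0 = (GREATEST n. P n)"
  have Pn0: "P n0" unfolding n0_def using GreatestI_nat[of P 0 D] P0 Pb by blast
  have maxn0: "n \<le> n0" if "P n" for n unfolding n0_def using Greatest_le_nat[of P n D] that Pb by blast
  obtain Vs where Vs: "lin_indep K0 Vs" "set Vs \<subseteq> AF" "length Vs = n0" using Pn0 unfolding P_def by blast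
  have "AF \<subseteq> ring.Span L0 K0 Vs"
  proof
    fix y assume y: "y \<in> AF"
    show "y \<in> ring.Span L0 K0 Vs"
    proof (rule ccontr)
      assume "y \<notin> ring.Span L0 K0 Vs"
      then have "lin_indep K0 (y # Vs)" using W9[OF K0 Vs(1)] by blast
      moreover have "set (y # Vs) \<subseteq> AF" using y Vs(2) by simp
      ultimately have "P (Suc n0)" unfolding P_def using Vs(3) by (intro exI[of _ "y # Vs"]) simp
      then show False using maxn0 by fastforce
    qed
  qed
  then show ?thesis using Vs unfolding AF_def by blast
qed

lemma transport_sum:
  assumes am: "abelian_monoid R" and car: "carrier R = f ` AF"
    and add: "\<And>a b. add R a b = f (g a + g b)" and z: "zero R = f 0"
    and gf: "\<And>y. y \<in> AF \<Longrightarrow> g (f y) = y" and inj: "inj_on f AF" and AF: "is_subfield AF"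
    and V: "finite V" "V \<subseteq> AF" and h: "\<And>v. v \<in> V \<Longrightarrow> h v \<in> AF"
  shows "finsum R (\<lambda>b. f (h (g b))) (f ` V) = f (\<Sum>v\<in>V. h v)"
  using V h
proof (induct V rule: finite_induct)
  case empty
  then show ?case using abelian_monoid.finsum_empty[OF am] z by simp
next
  case (insert v V)
  have vAF: "v \<in> AF" and VAF: "V \<subseteq> AF" using insert by auto
  have nin: "f v \<notin> f ` V"
  proof
    assume "f v \<in> f ` V"
    then obtain w where "w \<in> V" "f v = f w" by blast
    then have "v = w" using inj vAF VAF unfolding inj_on_def by blast
    then show False using insert(2) \<open>w \<in> V\<close> by simp
  qed
  have fn1: "(\<lambda>b. f (h (g b))) \<in> f ` V \<rightarrow> carrier R"
    using insert(5) gf VAF car by auto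
  have fv: "f (h (g (f v))) \<in> carrier R" using insert(5) gf vAF car by auto
  have "finsum R (\<lambda>b. f (h (g b))) (f ` insert v V)
      = finsum R (\<lambda>b. f (h (g b))) (insert (f v) (f ` V))" by simp
  also have "\<dots> = add R (f (h (g (f v)))) (finsum R (\<lambda>b. f (h (g b))) (f ` V))"
    using abelian_monoid.finsum_insert[OF am, of "f ` V" "f v" "\<lambda>b. f (h (g b))"] insert(1) nin fn1 fv
    by simp
  also have "\<dots> = add R (f (h v)) (f (\<Sum>v\<in>V. h v))"
    using insert gf vAF by simp
  also have "\<dots> = f (h v + (\<Sum>v\<in>V. h v))"
  proof -
    have "(\<Sum>v\<in>V. h v) \<in> AF" by (rule subf_sum[OF AF]) (use insert(5) in simp)
    then show ?thesis using add gf insert(5) by simp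
  qed
  also have "\<dots> = f (\<Sum>v\<in>insert v V. h v)" using insert(1,2) by simp
  finally show ?case .
qed

lemma lemA:
  fixes e :: "'k::field \<Rightarrow> 'l::field" and \<phi> :: "'k \<Rightarrow> 'k" and \<Phi> :: "'l \<Rightarrow> 'l"
  assumes e: "ring_endo e" and Phi: "ring_endo \<Phi>" and Phie: "\<forall>a. \<Phi> (e a) = e (\<phi> a)"
    and AF: "is_subfield AF" and eAF: "range e \<subseteq> AF" and PhiAF: "\<Phi> ` AF \<subseteq> AF"
    and VsAF: "set Vs \<subseteq> AF" and li: "lin_indep (range e) Vs" and sp: "AF \<subseteq> ring.Span L0 (range e) Vs"
    and H: "\<forall>(R::'k poly ring) \<iota> \<psi>. finite_ext_with_endo \<phi> R \<iota> \<psi> \<longrightarrow> carrier R = range \<iota>"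
  shows "AF \<subseteq> range e"
proof -
  have K0: "is_subfield (range e)" using re_range_subfield[OF e] .
  define m where "m = length Vs"
  have rep0: "\<exists>c'. y = (\<Sum>j<m. e (c' j) * Vs!j)" if y: "y \<in> AF" for y
  proof -
    obtain c where c: "\<forall>j<length Vs. c j \<in> range e" "y = (\<Sum>j<length Vs. c j * Vs!j)"
      using W8[OF K0] y sp by blast
    have "y = (\<Sum>j<m. e (inv_into UNIV e (c j)) * Vs!j)"
      unfolding m_def c(2) by (rule sum.cong) (simp_all add: c(1) f_inv_into_f)
    then show ?thesis by (intro exI[of _ "\<lambda>j. inv_into UNIV e (c j)"])
  qed
  define cf where "cf y = (SOME c'. y = (\<Sum>j<m. e (c' j) * Vs!j))" for y
  have rep1: "y = (\<Sum>j<m. e (cf y j) * Vs!j)" if "y \<in> AF" for y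
    unfolding cf_def using someI_ex[OF rep0[OF that]] .
  define f where "f y = Poly (map (cf y) [0..<m])" for y
  have coeff_f: "Polynomial.coeff (f y) j = cf y j" if "j < m" for y j
    unfolding f_def using that by (simp add: nth_default_def)
  have rep: "y = (\<Sum>j<m. e (Polynomial.coeff (f y) j) * Vs!j)" if "y \<in> AF" for y
    using rep1[OF that] by (simp add: coeff_f)
  have inj: "inj_on f AF"
  proof (rule inj_onI)
    fix x y assume "x \<in> AF" "y \<in> AF" "f x = f y"
    then show "x = y" using rep by metis
  qed
  define g where "g = inv_into AF f"
  have gf: "g (f y) = y" if "y \<in> AF" for y unfolding g_def using inv_into_f_f[OF inj that] .
  define R :: "'k poly ring" where "R = \<lparr>carrier = f ` AF, monoid.mult = (\<lambda>a b. f (g a * g b)),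
     one = f 1, zero = f 0, add = (\<lambda>a b. f (g a + g b))\<rparr>"
  have Rs: "carrier R = f ` AF" "monoid.mult R = (\<lambda>a b. f (g a * g b))" "one R = f 1" "zero R = f 0"
     "add R = (\<lambda>a b. f (g a + g b))" by (simp_all add: R_def)
  have AF0: "0 \<in> AF" "1 \<in> AF" using AF unfolding is_subfield_def by auto
  have AFc: "x * y \<in> AF" "x + y \<in> AF" if "x \<in> AF" "y \<in> AF" for x y
    using AF that unfolding is_subfield_def by auto
  have eA: "e a \<in> AF" for a using eAF by auto
  define L1 where "L1 = (L0::'l ring)\<lparr>carrier := AF\<rparr>"
  have fL1: "field L1" unfolding L1_def using ring.subfield_iff(2)[OF ring_L0 sf[OF AF]] .
  have L1s: "carrier L1 = AF" "monoid.mult L1 = (*)" "one L1 = 1" "zero L1 = 0" "add L1 = (+)"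
    by (simp_all add: L1_def)
  have iso: "f \<in> ring_iso L1 R"
    unfolding ring_iso_def
  proof (intro CollectI conjI)
    show "f \<in> ring_hom L1 R"
      by (rule ring_hom_memI) (simp_all add: L1s Rs gf AFc)
    show "bij_betw f (carrier L1) (carrier R)" using inj by (simp add: L1s Rs bij_betw_def)
  qed
  have "field (R\<lparr>zero := f (zero L1)\<rparr>)" using field.ring_iso_imp_img_field[OF fL1 iso] .
  moreover have "R\<lparr>zero := f (zero L1)\<rparr> = R" by (simp add: L1s R_def)
  ultimately have fR: "field R" by simp
  have amR: "abelian_monoid R" using fR
    by (meson abelian_group.axioms(1) field.is_ring ring.is_abelian_group)
  define \<iota> where "\<iota> a = f (e a)" for a
  define \<psi> where "\<psi> b = f (\<Phi> (g b))" for b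
  have dist: "distinct Vs"
    using ring.independent_distinct[OF ring_L0 sf[OF K0]] indep_iff[OF K0] li by blast
  define idx where "idx v = (SOME j. j < m \<and> Vs!j = v)" for v
  have idx: "idx (Vs!j) = j" if "j < m" for j
  proof -
    have "idx (Vs!j) < m \<and> Vs!(idx (Vs!j)) = Vs!j"
      unfolding idx_def by (rule someI[of _ j]) (use that in simp)
    then show ?thesis using dist that m_def nth_eq_iff_index_eq by blast
  qed
  have fe: "finite_ext_with_endo \<phi> R \<iota> \<psi>"
    unfolding finite_ext_with_endo_def
  proof (intro conjI allI)
    show "field R" by (rule fR)
    show "range \<iota> \<subseteq> carrier R" using eAF by (auto simp: \<iota>_def Rs)
    show "\<iota> 1 = one R" by (simp add: \<iota>_def Rs re_1[OF e])
  next
    fix a b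
    show "\<iota> (a + b) = add R (\<iota> a) (\<iota> b)"
      by (simp add: \<iota>_def Rs gf eA re_add[OF e])
    show "\<iota> (a * b) = monoid.mult R (\<iota> a) (\<iota> b)"
      by (simp add: \<iota>_def Rs gf eA re_mult[OF e])
  next
    show "\<psi> \<in> ring_hom R R"
    proof (rule ring_hom_memI)
      fix x assume "x \<in> carrier R"
      then obtain y where y: "y \<in> AF" "x = f y" using Rs by auto
      then show "\<psi> x \<in> carrier R" using PhiAF by (auto simp: \<psi>_def Rs gf)
    next
      fix x y assume "x \<in> carrier R" "y \<in> carrier R"
      then obtain x' y' where xy: "x' \<in> AF" "x = f x'" "y' \<in> AF" "y = f y'" using Rs by auto
      have "\<Phi> x' \<in> AF" "\<Phi> y' \<in> AF" using xy PhiAF by auto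
      then show "\<psi> (monoid.mult R x y) = monoid.mult R (\<psi> x) (\<psi> y)"
        "\<psi> (add R x y) = add R (\<psi> x) (\<psi> y)"
        using xy by (simp_all add: \<psi>_def Rs gf AFc re_mult[OF Phi] re_add[OF Phi])
    next
      show "\<psi> (one R) = one R" by (simp add: \<psi>_def Rs gf AF0 re_1[OF Phi])
    qed
  next
    fix a
    show "\<psi> (\<iota> a) = \<iota> (\<phi> a)" by (simp add: \<psi>_def \<iota>_def gf eA Phie)
  next
    show "\<exists>B. finite B \<and> B \<subseteq> carrier R \<and>
        (\<forall>x\<in>carrier R. \<exists>c. x = finsum R (\<lambda>b. monoid.mult R (\<iota> (c b)) b) B)"
    proof (rule exI[of _ "f ` set Vs"], intro conjI ballI)
      show "finite (f ` set Vs)" by simp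
      show "f ` set Vs \<subseteq> carrier R" using VsAF by (auto simp: Rs)
    next
      fix x assume "x \<in> carrier R"
      then obtain y where y: "y \<in> AF" "x = f y" using Rs by auto
      define h where "h v = e (Polynomial.coeff (f y) (idx v)) * v" for v
      have hAF: "h v \<in> AF" if "v \<in> set Vs" for v
        unfolding h_def using AFc(1) eAF VsAF that by blast
      have "(\<Sum>v\<in>set Vs. h v) = (\<Sum>j<m. h (Vs!j))"
        using sum.reindex_bij_betw[OF bij_betw_nth[OF dist, of "{..<m}" "set Vs"], of h] m_def by simp
      also have "\<dots> = (\<Sum>j<m. e (Polynomial.coeff (f y) j) * Vs!j)"
        by (rule sum.cong) (simp_all add: h_def idx)
      also have "\<dots> = y" using rep[OF y(1)] by simp
      finally have sumh: "(\<Sum>v\<in>set Vs. h v) = y" .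
      have "finsum R (\<lambda>b. monoid.mult R (\<iota> (Polynomial.coeff (f y) (idx (g b)))) b) (f ` set Vs)
          = finsum R (\<lambda>b. f (h (g b))) (f ` set Vs)"
      proof (rule abelian_monoid.finsum_cong'[OF amR refl])
        show "(\<lambda>b. f (h (g b))) \<in> f ` set Vs \<rightarrow> carrier R"
          using hAF VsAF gf by (auto simp: Rs)
      next
        fix b assume "b \<in> f ` set Vs"
        then obtain v where v: "v \<in> set Vs" "b = f v" by blast
        then have "v \<in> AF" using VsAF by auto
        then show "monoid.mult R (\<iota> (Polynomial.coeff (f y) (idx (g b)))) b = f (h (g b))"
          using v by (simp add: Rs \<iota>_def gf h_def eA)
      qed
      also have "\<dots> = f (\<Sum>v\<in>set Vs. h v)"
        by (rule transport_sum[OF amR Rs(1) _ Rs(4) gf inj AF]) (use VsAF hAF Rs in auto)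
      also have "\<dots> = x" using sumh y by simp
      finally show "\<exists>c. x = finsum R (\<lambda>b. monoid.mult R (\<iota> (c b)) b) (f ` set Vs)"
        by (intro exI[of _ "\<lambda>b. Polynomial.coeff (f y) (idx (g b))"]) simp
    qed
  qed
  have car: "carrier R = range \<iota>" using H fe by blast
  show "AF \<subseteq> range e"
  proof
    fix y assume y: "y \<in> AF"
    then have "f y \<in> range \<iota>" using car Rs by auto
    then obtain a where "f y = f (e a)" unfolding \<iota>_def by blast
    then have "y = e a" using inj y eAF unfolding inj_on_def by blast
    then show "y \<in> range e" by simp
  qed
qed

lemma alg_self: "is_subfield K \<Longrightarrow> y \<in> K \<Longrightarrow> alg K y"
  unfolding alg_def
proof (intro exI[of _ "[:-y, 1:]"] conjI allI)
  fix i assume K: "is_subfield K" and y: "y \<in> K"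
  show "Polynomial.coeff [:-y, 1:] i \<in> K"
    using K y by (cases i) (auto simp: coeff_pCons subf_uminus subf_1 subf_0 split: nat.splits)
qed simp_all

lemma funpow_comm_apply: "f \<circ> g = g \<circ> f \<Longrightarrow> f ((g ^^ i) y) = (g ^^ i) (f y)"
proof (induct i arbitrary: y)
  case 0 then show ?case by simp
next
  case (Suc i)
  then have "f (g ((g ^^ i) y)) = g (f ((g ^^ i) y))" by (metis comp_apply)
  then show ?case using Suc by simp
qed

theorem lemma3p6:
  fixes \<phi> \<sigma> :: "'k::field \<Rightarrow> 'k" and A :: "'k^'n^'n"
    and e :: "'k \<Rightarrow> 'l::field" and \<Phi> \<Sigma> :: "'l \<Rightarrow> 'l" and U :: "'l^'n^'n"
  assumes "ring_endo \<phi>" and "ring_endo \<sigma>" and "\<phi> \<circ> \<sigma> = \<sigma> \<circ> \<phi>"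
    and "condition_H \<phi> \<sigma>"
    and "invertible A"
    and "sigma_PV_field \<phi> \<sigma> A e \<Phi> \<Sigma> U"
  shows "rel_alg_closed_in e"
proof -
  note PV = assms(6)[unfolded sigma_PV_field_def]
  have e: "ring_endo e" and Phi: "ring_endo \<Phi>" and Sig: "ring_endo \<Sigma>"
    and comm: "\<Phi> \<circ> \<Sigma> = \<Sigma> \<circ> \<Phi>" and Phie: "\<forall>a. \<Phi> (e a) = e (\<phi> a)"
    and Sige: "\<forall>a. \<Sigma> (e a) = e (\<sigma> a)" and PhiU: "map_matrix \<Phi> U = map_matrix e A ** U"
    and gen: "generates_field (range e \<union> {(\<Sigma> ^^ i) (U $ j $ k) | i j k. True})"
    using PV by auto
  have H1: "\<forall>(R::'k poly ring) \<iota> \<psi>. finite_ext_with_endo \<phi> R \<iota> \<psi> \<longrightarrow> carrier R = range \<iota>"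
  proof -
    have h: "\<forall>r::nat. r > 0 \<longrightarrow> (\<forall>(R::'k poly ring) \<iota> \<psi>. finite_ext_with_endo (\<phi> ^^ r) R \<iota> \<psi> \<longrightarrow> carrier R = range \<iota>)"
      using assms(4) unfolding condition_H_def by (rule conjunct2[OF conjunct2])
    have "\<forall>(R::'k poly ring) \<iota> \<psi>. finite_ext_with_endo (\<phi> ^^ 1) R \<iota> \<psi> \<longrightarrow> carrier R = range \<iota>"
      using mp[OF spec[OF h, of 1]] by simp
    then show ?thesis by simp
  qed
  define K0 where "K0 = range e"
  have K0: "is_subfield K0" unfolding K0_def using re_range_subfield[OF e] .
  define Gd where "Gd d = {(\<Sigma> ^^ i) (U $ j $ k) | i j k. i \<le> d}" for d
  define Fd where "Fd d = gen_field (K0 \<union> Gd d)" for d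
  have Fd_sub: "is_subfield (Fd d)" for d unfolding Fd_def by (rule gen_field_subfield)
  have Fd_incl: "K0 \<union> Gd d \<subseteq> Fd d" for d unfolding Fd_def by (rule gen_field_incl)
  have Fd_mono: "Fd a \<subseteq> Fd b" if "a \<le> b" for a b
  proof -
    have "Gd a \<subseteq> Gd b"
    proof
      fix y assume "y \<in> Gd a"
      then obtain i j k where "y = (\<Sigma> ^^ i) (U $ j $ k)" "i \<le> a" unfolding Gd_def by blast
      then show "y \<in> Gd b" unfolding Gd_def using that le_trans by blast
    qed
    then show ?thesis unfolding Fd_def by (intro gen_field_mono) blast
  qed
  show ?thesis unfolding rel_alg_closed_in_def
  proof (intro allI impI)
    fix x assume "\<exists>p. p \<noteq> 0 \<and> poly (map_poly e p) x = 0"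
    then obtain p where p: "p \<noteq> 0" "poly (map_poly e p) x = 0" by blast
    define W where "W = (\<Union>d. Fd d)"
    have W: "is_subfield W"
      unfolding is_subfield_def
    proof (intro conjI ballI)
      show "0 \<in> W" "1 \<in> W" unfolding W_def using Fd_sub[of 0] unfolding is_subfield_def by auto
    next
      fix y z assume "y \<in> W" "z \<in> W"
      then obtain a b where "y \<in> Fd a" "z \<in> Fd b" unfolding W_def by blast
      then have "y \<in> Fd (max a b)" "z \<in> Fd (max a b)" using Fd_mono[of a "max a b"] Fd_mono[of b "max a b"] by auto
      then show "y + z \<in> W" "y * z \<in> W"
        unfolding W_def using Fd_sub[of "max a b"] unfolding is_subfield_def by blast+
    next
      fix y assume "y \<in> W"
      then obtain a where "y \<in> Fd a" unfolding W_def by blast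
      then show "- y \<in> W" "inverse y \<in> W"
        unfolding W_def using Fd_sub[of a] unfolding is_subfield_def by blast+
    qed
    have "range e \<union> {(\<Sigma> ^^ i) (U $ j $ k) | i j k. True} \<subseteq> W"
    proof
      fix y assume "y \<in> range e \<union> {(\<Sigma> ^^ i) (U $ j $ k) | i j k. True}"
      then show "y \<in> W"
      proof
        assume "y \<in> range e"
        then show "y \<in> W" using Fd_incl[of 0] unfolding W_def K0_def by blast
      next
        assume "y \<in> {(\<Sigma> ^^ i) (U $ j $ k) | i j k. True}"
        then obtain i j k where "y = (\<Sigma> ^^ i) (U $ j $ k)" by blast
        then have "y \<in> Gd i" unfolding Gd_def by blast
        then show "y \<in> W" using Fd_incl[of i] unfolding W_def by blast
      qed
    qed
    then have "W = UNIV" using gen W unfolding generates_field_def by blast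
    then obtain d where xd: "x \<in> Fd d" unfolding W_def by blast
    have SigPhi: "\<Phi> ((\<Sigma> ^^ i) y) = (\<Sigma> ^^ i) (\<Phi> y)" for i y
      using funpow_comm_apply[OF comm] .
    have Sige_i: "(\<Sigma> ^^ i) (e a) = e ((\<sigma> ^^ i) a)" for i a
    proof (induct i)
      case 0 then show ?case by simp
    next
      case (Suc i) then show ?case using Sige by simp
    qed
    have SigI: "ring_endo (\<Sigma> ^^ i)" for i using re_funpow[OF Sig] .
    have PhiFd: "\<Phi> y \<in> Fd d" if "y \<in> Fd d" for y
    proof -
      define P where "P = {y. \<Phi> y \<in> Fd d}"
      have P: "is_subfield P"
        unfolding is_subfield_def P_def
        using Fd_sub[of d] unfolding is_subfield_def
        by (simp add: re_0[OF Phi] re_1[OF Phi] re_add[OF Phi] re_mult[OF Phi]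
                      re_uminus[OF Phi] re_inverse[OF Phi])
      have "K0 \<union> Gd d \<subseteq> P"
      proof
        fix y assume "y \<in> K0 \<union> Gd d"
        then show "y \<in> P"
        proof
          assume "y \<in> K0"
          then obtain a where "y = e a" unfolding K0_def by blast
          then show "y \<in> P" unfolding P_def using Phie Fd_incl[of d] unfolding K0_def by auto
        next
          assume "y \<in> Gd d"
          then obtain i j k where ijk: "i \<le> d" "y = (\<Sigma> ^^ i) (U $ j $ k)" unfolding Gd_def by blast
          have "\<Phi> (U $ j $ k) = (map_matrix \<Phi> U) $ j $ k" by simp
          also have "\<dots> = (\<Sum>l\<in>UNIV. e (A $ j $ l) * U $ l $ k)"
            unfolding PhiU by (simp add: matrix_matrix_mult_def)
          finally have "\<Phi> y = (\<Sigma> ^^ i) (\<Sum>l\<in>UNIV. e (A $ j $ l) * U $ l $ k)"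
            using ijk(2) SigPhi by simp
          also have "\<dots> = (\<Sum>l\<in>UNIV. e ((\<sigma> ^^ i) (A $ j $ l)) * (\<Sigma> ^^ i) (U $ l $ k))"
            by (simp add: re_sum[OF SigI] re_mult[OF SigI] Sige_i)
          finally have eq: "\<Phi> y = (\<Sum>l\<in>UNIV. e ((\<sigma> ^^ i) (A $ j $ l)) * (\<Sigma> ^^ i) (U $ l $ k))" .
          have "(\<Sum>l\<in>UNIV. e ((\<sigma> ^^ i) (A $ j $ l)) * (\<Sigma> ^^ i) (U $ l $ k)) \<in> Fd d"
          proof (rule subf_sum[OF Fd_sub])
            fix l
            have "e ((\<sigma> ^^ i) (A $ j $ l)) \<in> Fd d" using Fd_incl[of d] unfolding K0_def by blast
            moreover have "(\<Sigma> ^^ i) (U $ l $ k) \<in> Gd d" unfolding Gd_def using ijk(1) by blast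
            then have "(\<Sigma> ^^ i) (U $ l $ k) \<in> Fd d" using Fd_incl[of d] by blast
            ultimately show "e ((\<sigma> ^^ i) (A $ j $ l)) * (\<Sigma> ^^ i) (U $ l $ k) \<in> Fd d"
              using subf_mult[OF Fd_sub] by blast
          qed
          then show "y \<in> P" unfolding P_def using eq by simp
        qed
      qed
      then have "Fd d \<subseteq> P" unfolding Fd_def[of d] using gen_field_min[OF P] by blast
      then show ?thesis using that unfolding P_def by blast
    qed
    have "Gd d \<subseteq> (\<lambda>(i, j, k). (\<Sigma> ^^ i) (U $ j $ k)) ` ({..d} \<times> UNIV \<times> UNIV)"
    proof
      fix y assume "y \<in> Gd d"
      then obtain i j k where ijk: "y = (\<Sigma> ^^ i) (U $ j $ k)" "i \<le> d" unfolding Gd_def by blast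
      show "y \<in> (\<lambda>(i, j, k). (\<Sigma> ^^ i) (U $ j $ k)) ` ({..d} \<times> UNIV \<times> UNIV)"
        by (rule image_eqI[of _ _ "(i, j, k)"]) (simp_all add: ijk)
    qed
    then have "finite (Gd d)" by (rule finite_subset) simp
    then obtain G where G: "set G = Gd d" using finite_list by blast
    obtain T S where TS: "is_subfield T" "is_subfield S" "K0 \<subseteq> T" "T \<subseteq> S" "fd T S"
      "set G \<subseteq> S" "REG K0 T" using core[OF K0, of G] by blast
    have FdS: "Fd d \<subseteq> S" unfolding Fd_def using TS G by (intro gen_field_min) auto
    define AF where "AF = Fd d \<inter> {x. alg K0 x}"
    obtain Vs where Vs: "set Vs \<subseteq> AF" "lin_indep K0 Vs" "AF \<subseteq> ring.Span L0 K0 Vs"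
      using lemB[OF K0 TS(1,2) FdS TS(5,7)] unfolding AF_def by blast
    have AF: "is_subfield AF" unfolding AF_def by (rule subf_Int[OF Fd_sub alg_subfield[OF K0]])
    have eAF: "range e \<subseteq> AF" unfolding AF_def using Fd_incl[of d] alg_self[OF K0] K0_def by blast
    have PhiAF: "\<Phi> ` AF \<subseteq> AF"
    proof
      fix z assume "z \<in> \<Phi> ` AF"
      then obtain y where y: "y \<in> AF" "z = \<Phi> y" by blast
      then obtain q where q: "q \<noteq> 0" "\<forall>i. Polynomial.coeff q i \<in> K0" "poly q y = 0"
        unfolding AF_def alg_def by blast
      have "map_poly \<Phi> q \<noteq> 0"
        using q(1) map_poly_eq_0_iff[of \<Phi> q] re_0[OF Phi] re_zero_iff[OF Phi] by blast
      moreover have "Polynomial.coeff (map_poly \<Phi> q) i \<in> K0" for i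
      proof -
        obtain a where "Polynomial.coeff q i = e a" using q(2) unfolding K0_def by blast
        then show ?thesis by (simp add: coeff_map_poly re_0[OF Phi] Phie K0_def)
      qed
      moreover have "poly (map_poly \<Phi> q) z = 0" using re_poly[OF Phi] q(3) y(2) re_0[OF Phi] by simp
      ultimately have "alg K0 z" unfolding alg_def by blast
      moreover have "z \<in> Fd d" using y PhiFd unfolding AF_def by blast
      ultimately show "z \<in> AF" unfolding AF_def by blast
    qed
    have xAF: "x \<in> AF"
    proof -
      have "map_poly e p \<noteq> 0"
        using p(1) map_poly_eq_0_iff[of e p] re_0[OF e] re_zero_iff[OF e] by blast
      moreover have "Polynomial.coeff (map_poly e p) i \<in> K0" for i
        by (simp add: coeff_map_poly re_0[OF e] K0_def)
      ultimately have "alg K0 x" unfolding alg_def using p(2) by blast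
      then show ?thesis unfolding AF_def using xd by blast
    qed
    have "AF \<subseteq> range e"
      using lemA[OF e Phi Phie AF eAF PhiAF Vs(1) Vs(2)[unfolded K0_def] Vs(3)[unfolded K0_def] H1] .
    then show "x \<in> range e" using xAF by blast
  qed
qed

end
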